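(* Let $\lambda>0$, $d\in\mathbb{N}$, and equip $\mathbb{R}^d$ with $\|x\|_1=\sum_{i=1}^d|x_i|$. Define $Q:\mathbb{R}^d\to\mathbb{R}^d$ by $Q(x_1,\dots,x_d)=(\lambda-x_d,x_1,\dots,x_{d-1})$, $P_C:\mathbb{R}^d\to\mathbb{R}^d$ by $(P_C(x))_i=P_{[0,\lambda]}(x_i)$, where $P_{[0,\lambda]}(t)=\min\{\max\{t,0\},\lambda\}$, and $T=Q\circ P_C$. For $x\in\mathbb{R}^d$, let $\operatorname{prog}(x)=\max\{i\in\{1,\dots,d\}: |x_i|>0\}$ and $\operatorname{prog}(0)=0$. Then for all $x\in\mathbb{R}^d$ with $\operatorname{prog}(x)<d$, $\|x-Tx\|_1\ge\lambda$. *)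

theory Defs
  imports Main Complex_Main
begin

text \<open>Vectors in R^d are represented as functions nat => real, using only the
coordinates 1..d.\<close>

definition norm1 :: "nat \<Rightarrow> (nat \<Rightarrow> real) \<Rightarrow> real" where
  "norm1 d x = (\<Sum>i=1..d. \<bar>x i\<bar>)"

definition proj_interval :: "real \<Rightarrow> real \<Rightarrow> real" where
  "proj_interval lam t = min (max t 0) lam"

definition PC :: "real \<Rightarrow> (nat \<Rightarrow> real) \<Rightarrow> (nat \<Rightarrow> real)" where
  "PC lam x = (\<lambda>i. proj_interval lam (x i))"

definition Qmap :: "nat \<Rightarrow> real \<Rightarrow> (nat \<Rightarrow> real) \<Rightarrow> (nat \<Rightarrow> real)" where
  "Qmap d lam x = (\<lambda>i. if i = 1 then lam - x d else x (i - 1))"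

definition Tmap :: "nat \<Rightarrow> real \<Rightarrow> (nat \<Rightarrow> real) \<Rightarrow> (nat \<Rightarrow> real)" where
  "Tmap d lam = Qmap d lam \<circ> PC lam"

definition prog :: "nat \<Rightarrow> (nat \<Rightarrow> real) \<Rightarrow> nat" where
  "prog d x = (if \<exists>i\<in>{1..d}. \<bar>x i\<bar> > 0 then Max {i\<in>{1..d}. \<bar>x i\<bar> > 0} else 0)"

end

theory Submission
  imports Defs
begin

lemma tele: "(\<Sum>i=1..(d::nat). (y (i-1) - y i)) = (y 0 - y d :: real)"
  by (induction d) auto

theorem lemma2:
  fixes lam :: real and d :: nat and x :: "nat \<Rightarrow> real"
  assumes "lam > 0"
    and "prog d x < d"
  shows "norm1 d (\<lambda>i. x i - Tmap d lam x i) \<ge> lam"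
proof -
  have d1: "d \<ge> 1" using assms(2) by simp
  have xd: "x d = 0"
  proof (rule ccontr)
    assume "x d \<noteq> 0"
    hence "d \<in> {i\<in>{1..d}. \<bar>x i\<bar> > 0}" using d1 by auto
    hence "Max {i\<in>{1..d}. \<bar>x i\<bar> > 0} \<ge> d" by (intro Max_ge) auto
    moreover have "\<exists>i\<in>{1..d}. \<bar>x i\<bar> > 0" using \<open>x d \<noteq> 0\<close> d1 by auto
    ultimately have "prog d x \<ge> d" unfolding prog_def by simp
    thus False using assms(2) by simp
  qed
  define y where "y i = (if i = 0 then lam else proj_interval lam (x i))" for i
  have yin: "0 \<le> y i \<and> y i \<le> lam" for i
    using assms(1) by (auto simp: y_def proj_interval_def)
  have yd: "y d = 0" using d1 xd assms(1) by (simp add: y_def proj_interval_def)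
  have T: "Tmap d lam x i = y (i-1)" if "i \<ge> 1" for i
    using that xd assms(1) by (auto simp: Tmap_def Qmap_def PC_def y_def proj_interval_def)
  have step: "\<bar>x i - Tmap d lam x i\<bar> \<ge> y (i-1) - y i" if "i \<in> {1..d}" for i
  proof -
    have i0: "i \<noteq> 0" using that by auto
    have "y i = min (max (x i) 0) lam" using i0 by (simp add: y_def proj_interval_def)
    moreover have "0 \<le> y (i-1)" "y (i-1) \<le> lam" using yin by auto
    ultimately show ?thesis using T[of i] i0 by (auto simp: min_def max_def)
  qed
  have "lam = (\<Sum>i=1..d. (y (i-1) - y i))" using tele[of y d] yd by (simp add: y_def)
  also have "\<dots> \<le> (\<Sum>i=1..d. \<bar>x i - Tmap d lam x i\<bar>)" by (rule sum_mono) (rule step)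
  finally show ?thesis by (simp add: norm1_def)
qed

end
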